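(* Let $N\ge 2$, let $T_N$ be the homogeneous tree in which every vertex has degree $N$, and fix a root $o$. Let $m>1$ and $(p,q)\in G_2=\{(p,q)\in\mathbb R^2: q\ge m\}$. Then for every $\epsilon>0$ there exists a weight $\mu$ on $T_N$ such that $$W_o(n)\asymp n^{m}(\ln n)^{m-1+\epsilon}\quad\text{for } n\ge 2,$$ and the inequality $\Delta_m u+u^p|\nabla u|^q\le 0$ on $T_N$ admits a nontrivial positive solution.
   Context: A weight on a graph $(V,E)$ is a symmetric function $\mu:V\times V\to[0,\infty)$ with $\mu_{xy}=\mu_{yx}>0$ if and only if $x\sim y$ (adjacent); $\mu(x)=\sum_{y\sim x}\mu_{xy}$. For $m>1$, $\Delta_m u(x)=\frac{1}{\mu(x)}\sum_{y\sim x}\mu_{xy}|u(y)-u(x)|^{m-2}(u(y)-u(x))$ and $|\nabla u(x)|=\big(\sum_{y\sim x}\frac{\mu_{xy}}{2\mu(x)}(u(y)-u(x))^2\big)^{1/2}$. $d$ is the graph distance, $B(o,n)=\{x: d(o,x)\le n\}$, $W_o(n)=\sum_{x\in B(o,n),\,y\in V,\,d(o,x)<d(o,y)}\mu_{xy}$. $f(n)\asymp g(n)$ for $n\ge2$ means there are constants $c,C>0$ with $c\,g(n)\le f(n)\le C\,g(n)$ for all $n\ge 2$. A nontrivial positive solution is a non-constant $u:V\to(0,\infty)$ with $\Delta_m u(x)+u(x)^p|\nabla u(x)|^q\le0$ for all $x\in V$. *)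

theory Defs
  imports Complex_Main
begin

text \<open>Vertices are words (lists of naturals) describing the path from a base vertex []:
the first letter is < N, every later letter is < N - 1. Two words are adjacent
iff one is obtained from the other by appending a single letter.\<close>

definition tree_verts :: "nat \<Rightarrow> nat list set" where
  "tree_verts N = {xs. (xs = [] \<or> hd xs < N) \<and> (\<forall>a\<in>set (tl xs). a < N - 1)}"

definition tree_adj :: "nat \<Rightarrow> nat list \<Rightarrow> nat list \<Rightarrow> bool" where
  "tree_adj N x y \<longleftrightarrow> x \<in> tree_verts N \<and> y \<in> tree_verts N \<and>
     ((\<exists>a. y = x @ [a]) \<or> (\<exists>a. x = y @ [a]))"

definition tree_dist :: "nat \<Rightarrow> nat list \<Rightarrow> nat list \<Rightarrow> nat" where
  "tree_dist N x y = (LEAST n. (tree_adj N ^^ n) x y)"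

definition nbrs :: "nat \<Rightarrow> nat list \<Rightarrow> nat list set" where
  "nbrs N x = {y. tree_adj N x y}"

definition is_weight :: "nat \<Rightarrow> (nat list \<Rightarrow> nat list \<Rightarrow> real) \<Rightarrow> bool" where
  "is_weight N \<mu> \<longleftrightarrow> (\<forall>x y. \<mu> x y = \<mu> y x \<and> \<mu> x y \<ge> 0 \<and> (\<mu> x y > 0 \<longleftrightarrow> tree_adj N x y))"

definition vmeas :: "nat \<Rightarrow> (nat list \<Rightarrow> nat list \<Rightarrow> real) \<Rightarrow> nat list \<Rightarrow> real" where
  "vmeas N \<mu> x = (\<Sum>y\<in>nbrs N x. \<mu> x y)"

definition m_laplacian :: "nat \<Rightarrow> (nat list \<Rightarrow> nat list \<Rightarrow> real) \<Rightarrow> real \<Rightarrow> (nat list \<Rightarrow> real) \<Rightarrow> nat list \<Rightarrow> real" where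
  "m_laplacian N \<mu> m u x =
     (1 / vmeas N \<mu> x) * (\<Sum>y\<in>nbrs N x. \<mu> x y * \<bar>u y - u x\<bar> powr (m - 2) * (u y - u x))"

definition grad_norm :: "nat \<Rightarrow> (nat list \<Rightarrow> nat list \<Rightarrow> real) \<Rightarrow> (nat list \<Rightarrow> real) \<Rightarrow> nat list \<Rightarrow> real" where
  "grad_norm N \<mu> u x = sqrt (\<Sum>y\<in>nbrs N x. \<mu> x y / (2 * vmeas N \<mu> x) * (u y - u x)\<^sup>2)"

definition W :: "nat \<Rightarrow> (nat list \<Rightarrow> nat list \<Rightarrow> real) \<Rightarrow> nat list \<Rightarrow> nat \<Rightarrow> real" where
  "W N \<mu> r n = (\<Sum>x\<in>{x\<in>tree_verts N. tree_dist N r x \<le> n}.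
       \<Sum>y\<in>{y\<in>nbrs N x. tree_dist N r x < tree_dist N r y}. \<mu> x y)"

definition asymp_equiv2 :: "(nat \<Rightarrow> real) \<Rightarrow> (nat \<Rightarrow> real) \<Rightarrow> bool" where
  "asymp_equiv2 f g \<longleftrightarrow> (\<exists>c C. c > 0 \<and> C > 0 \<and> (\<forall>n\<ge>2. c * g n \<le> f n \<and> f n \<le> C * g n))"

end

theory Submission
  imports Defs "HOL-Library.Sublist" "HOL-Analysis.Analysis"
begin

function Dd :: "nat list \<Rightarrow> nat list \<Rightarrow> nat" where
  "Dd r x = (if prefix x r then length r - length x else Suc (Dd r (butlast x)))"
  by auto
termination
  by (relation "Wellfounded.measure (\<lambda>(r,x). length x)") (auto, case_tac x, auto)

declare Dd.simps [simp del]

locale T =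
  fixes N :: nat and r :: "nat list"
  assumes N2: "N \<ge> 2" and rV: "r \<in> tree_verts N"
begin

abbreviation "V \<equiv> tree_verts N"
abbreviation "adj \<equiv> tree_adj N"
abbreviation "D \<equiv> Dd r"

lemma V_append: "xs @ ys \<in> V \<Longrightarrow> xs \<in> V"
  by (cases xs) (auto simp: tree_verts_def)

lemma V_snoc: "x @ [a] \<in> V \<longleftrightarrow> x \<in> V \<and> a < (if x = [] then N else N - 1)"
  by (cases x) (auto simp: tree_verts_def)

lemma V_prefix: "prefix x y \<Longrightarrow> y \<in> V \<Longrightarrow> x \<in> V"
  by (auto simp: prefix_def intro: V_append)

lemma adj_sym: "adj x y = adj y x"
  by (auto simp: tree_adj_def)

lemma D_r: "D r = 0"
  by (simp add: Dd.simps)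

lemma D_snoc_pre: "prefix (x@[a]) r \<Longrightarrow> D x = Suc (D (x@[a]))"
proof -
  assume h: "prefix (x@[a]) r"
  hence "prefix x r" by (metis prefix_snocD prefix_order.less_imp_le)
  moreover have "length (x@[a]) \<le> length r" using h prefix_length_le by blast
  ultimately show ?thesis using h by (simp add: Dd.simps)
qed

lemma D_snoc_npre: "\<not> prefix (x@[a]) r \<Longrightarrow> D (x@[a]) = Suc (D x)"
  by (subst Dd.simps) simp

lemma adj_D: "adj x y \<Longrightarrow> D y = Suc (D x) \<or> D x = Suc (D y)"
  unfolding tree_adj_def
  by (metis D_snoc_npre D_snoc_pre)

lemma walk_D: "(adj ^^ n) r x \<Longrightarrow> D x \<le> n"
proof (induction n arbitrary: x)
  case 0 thus ?case by (auto elim!: relpowp_0_E simp: Dd.simps)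
next
  case (Suc n)
  from Suc.prems obtain y where "(adj ^^ n) r y" "adj y x" by (auto elim: relpowp_Suc_E)
  with Suc.IH[of y] adj_D[of y x] show ?case by auto
qed

lemma up_walk: "c @ t \<in> V \<Longrightarrow> (adj ^^ length t) (c @ t) c"
proof (induction t rule: rev_induct)
  case Nil thus ?case by simp
next
  case (snoc a t)
  have "c @ t \<in> V" using snoc.prems V_append[of "c@t" "[a]"] by simp
  hence h: "adj (c @ t @ [a]) (c @ t)" using snoc.prems by (auto simp: tree_adj_def)
  have "(adj ^^ Suc (length t)) (c @ t @ [a]) c" by (rule relpowp_Suc_I2[OF h snoc.IH[OF \<open>c @ t \<in> V\<close>]])
  thus ?case by (metis length_append_singleton)
qed

lemma walk_pre: "prefix x r \<Longrightarrow> (adj ^^ D x) r x"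
proof -
  assume True: "prefix x r"
  then obtain t where t: "r = x @ t" by (auto simp: prefix_def)
  have "D x = length t" using True t by (simp add: Dd.simps)
  thus ?thesis using up_walk[of x t] rV t by simp
qed

lemma walk_exists: "x \<in> V \<Longrightarrow> (adj ^^ D x) r x"
proof (induction x rule: rev_induct)
  case Nil thus ?case using walk_pre by simp
next
  case (snoc a y)
  show ?case
  proof (cases "prefix (y@[a]) r")
    case True thus ?thesis by (rule walk_pre)
  next
    case False
    have yV: "y \<in> V" using snoc.prems V_append by blast
    have "adj y (y@[a])" using yV snoc.prems by (auto simp: tree_adj_def)
    have e: "D (y@[a]) = Suc (D y)" by (rule D_snoc_npre[OF False])
    show ?thesis unfolding e by (rule relpowp_Suc_I[OF snoc.IH[OF yV] \<open>adj y (y@[a])\<close>])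
  qed
qed

lemma dist_eq: assumes "x \<in> V" shows "tree_dist N r x = D x"
  unfolding tree_dist_def
  by (rule Least_equality[where P="\<lambda>n. (adj ^^ n) r x", OF walk_exists[OF assms]]) (rule walk_D)


lemma nbrs_V: "y \<in> nbrs N x \<Longrightarrow> y \<in> V"
  by (auto simp: nbrs_def tree_adj_def)

lemma nbrs_eq: assumes xV: "x \<in> V"
  shows "nbrs N x = (if x = [] then {} else {butlast x}) \<union> (\<lambda>a. x @ [a]) ` {..< (if x = [] then N else N - 1)}"
proof (rule set_eqI)
  fix y
  show "y \<in> nbrs N x \<longleftrightarrow> y \<in> (if x = [] then {} else {butlast x}) \<union> (\<lambda>a. x @ [a]) ` {..< (if x = [] then N else N - 1)}"
  proof
    assume "y \<in> nbrs N x"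
    hence yV: "y \<in> V" and h: "(\<exists>a. y = x @ [a]) \<or> (\<exists>a. x = y @ [a])" by (auto simp: nbrs_def tree_adj_def)
    show "y \<in> (if x = [] then {} else {butlast x}) \<union> (\<lambda>a. x @ [a]) ` {..< (if x = [] then N else N - 1)}"
      using h
    proof
      assume "\<exists>a. y = x @ [a]"
      then obtain a where a: "y = x @ [a]" by blast
      hence "a < (if x = [] then N else N - 1)" using yV V_snoc by blast
      thus ?thesis using a by auto
    next
      assume "\<exists>a. x = y @ [a]"
      then obtain a where a: "x = y @ [a]" by blast
      thus ?thesis by auto
    qed
  next
    assume h: "y \<in> (if x = [] then {} else {butlast x}) \<union> (\<lambda>a. x @ [a]) ` {..< (if x = [] then N else N - 1)}"
    show "y \<in> nbrs N x"
    proof (cases "y \<in> (\<lambda>a. x @ [a]) ` {..< (if x = [] then N else N - 1)}")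
      case True
      then obtain a where a: "y = x @ [a]" "a < (if x = [] then N else N - 1)" by auto
      hence "y \<in> V" using V_snoc xV by blast
      thus ?thesis using a xV by (auto simp: nbrs_def tree_adj_def)
    next
      case False
      hence "x \<noteq> []" "y = butlast x" using h by (auto split: if_splits)
      hence xe: "x = y @ [last x]" by simp
      hence "y \<in> V" using xV V_append by metis
      thus ?thesis using xe xV unfolding nbrs_def tree_adj_def by blast
    qed
  qed
qed

lemma nbrs_finite: "x \<in> V \<Longrightarrow> finite (nbrs N x)"
  by (simp add: nbrs_eq)

lemma nbrs_card: assumes xV: "x \<in> V" shows "card (nbrs N x) = N"
proof (cases "x = []")
  case True
  have "card ((\<lambda>a. x @ [a]) ` {..<N}) = N" by (subst card_image) (auto simp: inj_on_def)
  thus ?thesis using True xV by (simp add: nbrs_eq)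
next
  case False
  have c: "card ((\<lambda>a. x @ [a]) ` {..<N-1}) = N - 1" by (subst card_image) (auto simp: inj_on_def)
  have "butlast x \<notin> (\<lambda>a. x @ [a]) ` {..<N-1}"
    using False by (auto dest: arg_cong[where f=length])
  hence "card ({butlast x} \<union> (\<lambda>a. x @ [a]) ` {..<N-1}) = N - 1 + 1" using c by simp
  thus ?thesis using False xV N2 by (simp add: nbrs_eq)
qed

lemma adj_nbrs: "y \<in> nbrs N x \<longleftrightarrow> adj x y"
  by (simp add: nbrs_def)

lemma D_zero: "D x = 0 \<Longrightarrow> x = r"
  by (subst (asm) Dd.simps) (auto split: if_splits simp: prefix_def)

definition \<pi> :: "nat list \<Rightarrow> nat list" where
  "\<pi> x = (if prefix x r then x @ [r ! length x] else butlast x)"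

lemma pi_props: assumes xV: "x \<in> V" and xr: "x \<noteq> r"
  shows "\<pi> x \<in> nbrs N x" "D x = Suc (D (\<pi> x))"
proof -
  have "\<pi> x \<in> nbrs N x \<and> D x = Suc (D (\<pi> x))"
  proof (cases "prefix x r")
    case True
    then obtain t where t: "r = x @ t" by (auto simp: prefix_def)
    with xr obtain b t' where t': "t = b # t'" by (cases t) auto
    have "\<pi> x = x @ [r ! length x]" using True by (simp add: \<pi>_def)
    hence pe: "\<pi> x = x @ [b]" using t t' by (simp add: nth_append)
    have pr: "prefix (x @ [b]) r" using t t' by (simp add: prefix_def)
    hence "x @ [b] \<in> V" using rV V_prefix by blast
    hence "adj x (x @ [b])" using xV by (auto simp: tree_adj_def)
    thus ?thesis using pe D_snoc_pre[OF pr] by (simp add: adj_nbrs)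
  next
    case False
    hence "x \<noteq> []" by auto
    hence xe: "x = butlast x @ [last x]" by simp
    hence "butlast x \<in> V" using xV V_append by metis
    hence "adj x (butlast x)" using xV xe unfolding tree_adj_def by blast
    moreover have "D x = Suc (D (butlast x))" using D_snoc_npre[of "butlast x" "last x"] False xe by simp
    ultimately show ?thesis using False by (simp add: \<pi>_def adj_nbrs)
  qed
  thus "\<pi> x \<in> nbrs N x" "D x = Suc (D (\<pi> x))" by auto
qed

lemma closer_unique: assumes xV: "x \<in> V" and y: "y \<in> nbrs N x" and lt: "D y < D x"
  shows "y = \<pi> x"
proof -
  have "adj x y" using y adj_nbrs by blast
  hence "(\<exists>a. y = x @ [a]) \<or> (\<exists>a. x = y @ [a])" by (auto simp: tree_adj_def)
  thus ?thesis
  proof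
    assume "\<exists>a. y = x @ [a]"
    then obtain a where a: "y = x @ [a]" by blast
    have pr: "prefix (x @ [a]) r" using lt a D_snoc_npre[of x a] by (cases "prefix (x @ [a]) r") auto
    then obtain t where t: "r = x @ [a] @ t" by (auto simp: prefix_def)
    hence "prefix x r" by (simp add: prefix_def)
    hence "\<pi> x = x @ [r ! length x]" by (simp add: \<pi>_def)
    thus ?thesis using a t by (simp add: nth_append)
  next
    assume "\<exists>a. x = y @ [a]"
    then obtain a where a: "x = y @ [a]" by blast
    have "\<not> prefix x r" using lt a D_snoc_pre[of y a] by auto
    thus ?thesis using a by (simp add: \<pi>_def)
  qed
qed

definition F :: "nat list \<Rightarrow> nat list set" where
  "F x = {y \<in> nbrs N x. D x < D y}"

lemma nbr_D: "y \<in> nbrs N x \<Longrightarrow> D y = Suc (D x) \<or> D x = Suc (D y)"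
  using adj_D adj_nbrs by blast

lemma F_eq: assumes xV: "x \<in> V" and xr: "x \<noteq> r" shows "F x = nbrs N x - {\<pi> x}"
proof
  show "F x \<subseteq> nbrs N x - {\<pi> x}" using pi_props[OF xV xr] unfolding F_def by auto
  show "nbrs N x - {\<pi> x} \<subseteq> F x"
  proof
    fix y assume y: "y \<in> nbrs N x - {\<pi> x}"
    hence "\<not> D y < D x" using closer_unique[OF xV] by blast
    hence "D x < D y" using nbr_D[of y x] y by auto
    thus "y \<in> F x" using y by (simp add: F_def)
  qed
qed

lemma card_F: assumes xV: "x \<in> V" shows "card (F x) = (if x = r then N else N - 1)"
proof -
  have fin: "finite (nbrs N x)" using nbrs_finite xV by blast
  show ?thesis
  proof (cases "x = r")
    case True
    hence "F x = nbrs N x" using nbr_D[of _ r] D_r unfolding F_def by force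
    thus ?thesis using True nbrs_card xV by simp
  next
    case False
    have "F x = nbrs N x - {\<pi> x}" by (rule F_eq[OF xV False])
    moreover have "\<pi> x \<in> nbrs N x" using pi_props[OF xV False] by blast
    ultimately show ?thesis using False nbrs_card xV fin by (simp add: card_Diff_singleton)
  qed
qed

lemma sum_nbrs: assumes xV: "x \<in> V"
  shows "(\<Sum>y\<in>nbrs N x. f (D y)) = (if x = r then real N * f (Suc (D x)) else f (D x - 1) + real (N - 1) * f (Suc (D x)))"
proof -
  have fin: "finite (nbrs N x)" using nbrs_finite xV by blast
  have Fs: "F x \<subseteq> nbrs N x" by (auto simp: F_def)
  have "(\<Sum>y\<in>nbrs N x. f (D y)) = (\<Sum>y\<in>F x. f (D y)) + (\<Sum>y\<in>nbrs N x - F x. f (D y))"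
    using sum.subset_diff[OF Fs fin] by (simp add: add.commute)
  also have "(\<Sum>y\<in>F x. f (D y)) = (\<Sum>y\<in>F x. f (Suc (D x)))"
    by (rule sum.cong) (auto simp: F_def dest: nbr_D)
  also have "\<dots> = real (card (F x)) * f (Suc (D x))" by simp
  finally have e: "(\<Sum>y\<in>nbrs N x. f (D y)) = real (card (F x)) * f (Suc (D x)) + (\<Sum>y\<in>nbrs N x - F x. f (D y))" .
  show ?thesis
  proof (cases "x = r")
    case True
    hence "nbrs N x - F x = {}" using nbr_D[of _ r] D_r unfolding F_def by force
    hence z: "(\<Sum>y\<in>nbrs N x - F x. f (D y)) = 0" by (metis sum.empty)
    show ?thesis using e True card_F[OF xV] z by simp
  next
    case False
    have "nbrs N x - F x = {\<pi> x}"
      using F_eq[OF xV False] pi_props[OF xV False] by auto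
    moreover have "D (\<pi> x) = D x - 1" using pi_props[OF xV False] by simp
    ultimately show ?thesis using e False card_F xV by simp
  qed
qed


definition Lv :: "nat \<Rightarrow> nat list set" where
  "Lv k = {x \<in> V. D x = k}"

lemma len_le: "x \<in> V \<Longrightarrow> length x \<le> length r + D x"
proof (induction x rule: rev_induct)
  case Nil thus ?case by simp
next
  case (snoc a y)
  show ?case
  proof (cases "prefix (y@[a]) r")
    case True thus ?thesis using prefix_length_le by fastforce
  next
    case False
    have "y \<in> V" using snoc.prems V_append by blast
    thus ?thesis using snoc.IH D_snoc_npre[OF False] by simp
  qed
qed

lemma set_V: "x \<in> V \<Longrightarrow> set x \<subseteq> {..<N}"
  by (cases x) (auto simp: tree_verts_def)

lemma B_finite: "finite {x \<in> V. D x \<le> n}"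
proof (rule finite_subset)
  show "{x \<in> V. D x \<le> n} \<subseteq> {xs. set xs \<subseteq> {..<N} \<and> length xs \<le> length r + n}"
    using set_V len_le by fastforce
  show "finite {xs. set xs \<subseteq> {..<N} \<and> length xs \<le> length r + n}"
    by (rule finite_lists_length_le) simp
qed

lemma Lv_finite: "finite (Lv k)"
  by (rule finite_subset[OF _ B_finite[of k]]) (auto simp: Lv_def)

lemma F_V: "F x \<subseteq> V" using nbrs_V by (auto simp: F_def)

lemma F_finite: "x \<in> V \<Longrightarrow> finite (F x)"
  using nbrs_finite by (auto simp: F_def)

lemma Lv_Suc: "Lv (Suc k) = (\<Union>x\<in>Lv k. F x)"
proof
  show "Lv (Suc k) \<subseteq> (\<Union>x\<in>Lv k. F x)"
  proof
    fix y assume y: "y \<in> Lv (Suc k)"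
    hence yV: "y \<in> V" and Dy: "D y = Suc k" by (auto simp: Lv_def)
    have yr: "y \<noteq> r" using Dy D_r by auto
    note p = pi_props[OF yV yr]
    have "\<pi> y \<in> V" using p(1) nbrs_V by blast
    moreover have "D (\<pi> y) = k" using p(2) Dy by simp
    moreover have "y \<in> nbrs N (\<pi> y)" using p(1) adj_nbrs adj_sym by blast
    ultimately show "y \<in> (\<Union>x\<in>Lv k. F x)" using Dy by (auto simp: Lv_def F_def intro!: bexI[of _ "\<pi> y"])
  qed
  show "(\<Union>x\<in>Lv k. F x) \<subseteq> Lv (Suc k)"
  proof
    fix y assume "y \<in> (\<Union>x\<in>Lv k. F x)"
    then obtain x where x: "x \<in> Lv k" "y \<in> F x" by blast
    hence "y \<in> V" "D y = Suc k" using nbrs_V nbr_D[of y x] by (auto simp: Lv_def F_def)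
    thus "y \<in> Lv (Suc k)" by (simp add: Lv_def)
  qed
qed

lemma F_disj: assumes "x1 \<in> V" "x2 \<in> V" "x1 \<noteq> x2" shows "F x1 \<inter> F x2 = {}"
proof (rule ccontr)
  assume "F x1 \<inter> F x2 \<noteq> {}"
  then obtain y where y: "y \<in> F x1" "y \<in> F x2" by blast
  have yV: "y \<in> V" using y F_V by blast
  have "x1 \<in> nbrs N y" "x2 \<in> nbrs N y" using y adj_nbrs adj_sym by (auto simp: F_def)
  moreover have "D x1 < D y" "D x2 < D y" using y by (auto simp: F_def)
  ultimately have "x1 = \<pi> y" "x2 = \<pi> y" using closer_unique[OF yV] by auto
  thus False using assms by simp
qed

lemma card_Lv_Suc: "card (Lv (Suc k)) = (\<Sum>x\<in>Lv k. card (F x))"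
  unfolding Lv_Suc
  by (rule card_UN_disjoint[OF Lv_finite]) (auto simp: Lv_def intro: F_finite dest: F_disj)

lemma Lv_0: "Lv 0 = {r}"
  using D_zero D_r rV by (auto simp: Lv_def)

lemma card_Lv_Suc': "card (Lv (Suc k)) = card (Lv k) * (if k = 0 then N else N - 1)"
proof -
  have "(\<Sum>x\<in>Lv k. card (F x)) = (\<Sum>x\<in>Lv k. (if k = 0 then N else N - 1))"
  proof (rule sum.cong)
    fix x assume x: "x \<in> Lv k"
    hence "x \<in> V" "D x = k" by (auto simp: Lv_def)
    moreover have "x = r \<longleftrightarrow> k = 0" using calculation D_zero D_r by auto
    ultimately show "card (F x) = (if k = 0 then N else N - 1)" using card_F by simp
  qed simp
  thus ?thesis using card_Lv_Suc by simp
qed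

lemma card_Lv: "card (Lv k) = (if k = 0 then 1 else N * (N - 1) ^ (k - 1))"
proof (induction k)
  case 0 thus ?case using Lv_0 by simp
next
  case (Suc k) thus ?case using card_Lv_Suc'[of k] by (cases k) auto
qed

lemma W_formula:
  assumes mu: "\<And>x y. adj x y \<Longrightarrow> \<mu> x y = g (min (D x) (D y))"
  shows "W N \<mu> r n = (\<Sum>k\<le>n. real (card (Lv (Suc k))) * g k)"
proof -
  have outer: "{x \<in> V. tree_dist N r x \<le> n} = {x \<in> V. D x \<le> n}" using dist_eq by auto
  have inner: "(\<Sum>y\<in>{y \<in> nbrs N x. tree_dist N r x < tree_dist N r y}. \<mu> x y) = real (card (F x)) * g (D x)"
    if x: "x \<in> V" for x
  proof -
    have "{y \<in> nbrs N x. tree_dist N r x < tree_dist N r y} = F x"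
      using dist_eq x nbrs_V unfolding F_def by auto
    moreover have "(\<Sum>y\<in>F x. \<mu> x y) = (\<Sum>y\<in>F x. g (D x))"
      by (rule sum.cong) (auto simp: F_def adj_nbrs mu)
    ultimately show ?thesis by simp
  qed
  have W1: "W N \<mu> r n = (\<Sum>x\<in>{x \<in> V. D x \<le> n}. real (card (F x)) * g (D x))"
    unfolding W_def outer by (rule sum.cong) (auto simp: inner)
  have lv: "(\<Sum>x\<in>Lv k. real (card (F x)) * g (D x)) = real (card (Lv (Suc k))) * g k" for k
  proof -
    have "(\<Sum>x\<in>Lv k. real (card (F x)) * g (D x)) = (\<Sum>x\<in>Lv k. real (card (F x))) * g k"
      by (simp add: sum_distrib_right Lv_def)
    thus ?thesis using card_Lv_Suc by simp
  qed
  have "(\<Sum>x\<in>{x \<in> V. D x \<le> n}. real (card (F x)) * g (D x)) = (\<Sum>k\<le>n. real (card (Lv (Suc k))) * g k)"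
  proof (induction n)
    case 0
    have "{x \<in> V. D x \<le> 0} = Lv 0" by (auto simp: Lv_def)
    thus ?case using lv[of 0] by simp
  next
    case (Suc n)
    have e: "{x \<in> V. D x \<le> Suc n} = {x \<in> V. D x \<le> n} \<union> Lv (Suc n)" by (auto simp: Lv_def)
    have d: "{x \<in> V. D x \<le> n} \<inter> Lv (Suc n) = {}" by (auto simp: Lv_def)
    show ?case unfolding e
      by (subst sum.union_disjoint[OF B_finite Lv_finite d]) (simp add: Suc.IH lv)
  qed
  thus ?thesis using W1 by simp
qed

end

locale An =
  fixes m \<epsilon> :: real
  assumes m1: "m > 1" and e0: "\<epsilon> > 0"
begin

definition "s = 1 + \<epsilon> / (m - 1)"
definition "\<gamma> = m - 1 + \<epsilon>"
definition dd :: "nat \<Rightarrow> real" where "dd j = 1 / ((real j + 3) * ln (real j + 3) powr s)"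
definition \<phi> :: "real \<Rightarrow> real" where "\<phi> x = x powr (m - 1) * ln x powr \<gamma>"

lemma s_gt: "s > 1" using m1 e0 by (simp add: s_def)
lemma gamma_pos: "\<gamma> > 0" using m1 e0 by (simp add: \<gamma>_def)
lemma s_gamma: "s * (m - 1) = \<gamma>" using m1 by (simp add: s_def \<gamma>_def field_simps)

lemma ln_pos3: "ln (real j + 3) > 0" by simp

lemma dd_pos: "dd j > 0" by (simp add: dd_def)

lemma dd_mono: "dd (Suc j) \<le> dd j"
proof -
  have "ln (real j + 3) powr s \<le> ln (real (Suc j) + 3) powr s"
    by (rule powr_mono2) (use s_gt in auto)
  hence "(real j + 3) * ln (real j + 3) powr s \<le> (real (Suc j) + 3) * ln (real (Suc j) + 3) powr s"
    by (intro mult_mono) auto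
  thus ?thesis unfolding dd_def by (intro divide_left_mono) auto
qed

lemma dd_antimono: "i \<le> j \<Longrightarrow> dd j \<le> dd i"
  by (induction j rule: dec_induct) (auto intro: order_trans[OF dd_mono])

lemma summable_dd: "summable dd"
proof -
  have "summable (\<lambda>n. 2^n * dd (2^n))"
  proof (rule summable_comparison_test')
    show "summable (\<lambda>n. ln 2 powr (-s) * real n powr (-s))"
      by (rule summable_mult) (use s_gt in \<open>simp add: summable_real_powr_iff\<close>)
    show "norm (2^n * dd (2^n)) \<le> ln 2 powr (-s) * real n powr (-s)" if n: "n \<ge> 1" for n
    proof -
      have l1: "real n * ln 2 \<le> ln (2^n + 3)"
      proof -
        have "real n * ln 2 = ln (2^n :: real)" by (simp add: ln_realpow)
        also have "\<dots> \<le> ln (2^n + 3)" by (rule ln_mono) auto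
        finally show ?thesis .
      qed
      have np: "real n * ln 2 > 0" using n by simp
      have "2^n * dd (2^n) = 2^n / ((2^n + 3) * ln (2^n + 3) powr s)" by (simp add: dd_def)
      also have "\<dots> \<le> 1 / ln (2^n + 3) powr s"
      proof -
        have p: "(0::real) < 2^n" by simp
        hence "ln ((2::real)^n + 3) > 0" by (intro ln_gt_zero) linarith
        hence Lp: "ln ((2::real)^n + 3) powr s > 0" by (subst powr_gt_zero) linarith
        have p3: "(0::real) < 2^n + 3" using p by linarith
        have q: "(2::real)^n / (2^n+3) \<le> 1" using p3 by (subst pos_divide_le_eq) auto
        have "(2::real)^n / ((2^n + 3) * ln (2^n + 3) powr s) = (2^n / (2^n+3)) * (1 / ln (2^n + 3) powr s)"
          by simp
        also have "\<dots> \<le> 1 * (1 / ln (2^n + 3) powr s)"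
          using q Lp by (intro mult_right_mono) auto
        finally show ?thesis by simp
      qed
      also have "\<dots> \<le> 1 / (real n * ln 2) powr s"
      proof -
        have a: "0 < (real n * ln 2) powr s" using np n by simp
        have b: "(real n * ln 2) powr s \<le> ln (2^n+3) powr s" by (rule powr_mono2) (use np l1 s_gt in auto)
        have "0 < ln (2^n+3) powr s * (real n * ln 2) powr s" using a b by (intro mult_pos_pos) auto
        thus ?thesis by (intro divide_left_mono[OF b]) auto
      qed
      also have "\<dots> = ln 2 powr (-s) * real n powr (-s)"
        by (simp add: powr_minus_divide powr_mult divide_simps)
      finally have fin: "2^n * dd (2^n) \<le> ln 2 powr (-s) * real n powr (-s)" .
      have "(0::real) \<le> 2^n" by simp
      hence "0 \<le> (2::real)^n * dd (2^n)" using dd_pos[of "2^n"] by (intro mult_nonneg_nonneg) auto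
      thus ?thesis using fin by (simp only: real_norm_def abs_of_nonneg)
    qed
  qed
  thus ?thesis using condensation_test[of dd] dd_mono dd_pos less_imp_le by blast
qed

lemma dd_powr: "dd j powr (m - 1) * \<phi> (real j + 3) = 1"
proof -
  have a: "real j + 3 > 0" by simp
  have L: "ln (real j + 3) > 0" by simp
  have "dd j powr (m - 1) = 1 / ((real j + 3) powr (m - 1) * ln (real j + 3) powr \<gamma>)"
    unfolding dd_def using a L
    by (simp add: powr_divide powr_mult powr_powr s_gamma)
  thus ?thesis unfolding \<phi>_def using a L by simp
qed

lemma phi_mono: "1 \<le> x \<Longrightarrow> x \<le> y \<Longrightarrow> \<phi> x \<le> \<phi> y"
  unfolding \<phi>_def using m1 gamma_pos
  by (intro mult_mono powr_mono2) auto

lemma phi_nonneg: "1 \<le> x \<Longrightarrow> 0 \<le> \<phi> x"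
  unfolding \<phi>_def by simp

definition "R = 2 powr (m - 1) * 2 powr \<gamma>"

lemma phi_ratio: "\<phi> (real k + 4) \<le> R * \<phi> (real k + 3)"
proof -
  have "(real k + 4) powr (m - 1) \<le> (2 * (real k + 3)) powr (m - 1)"
    using m1 by (intro powr_mono2) auto
  also have "\<dots> = 2 powr (m - 1) * (real k + 3) powr (m - 1)" using powr_mult[of 2 "real k + 3" "m - 1"] by simp
  finally have i1: "(real k + 4) powr (m - 1) \<le> 2 powr (m - 1) * (real k + 3) powr (m - 1)" .
  have "real k + 4 \<le> (real k + 3) ^ 2" by (simp add: power2_eq_square algebra_simps)
  hence "ln (real k + 4) \<le> ln ((real k + 3) ^ 2)" by simp
  also have "\<dots> = 2 * ln (real k + 3)" by (simp add: ln_realpow)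
  finally have "ln (real k + 4) powr \<gamma> \<le> (2 * ln (real k + 3)) powr \<gamma>"
    using gamma_pos by (intro powr_mono2) auto
  also have "\<dots> = 2 powr \<gamma> * ln (real k + 3) powr \<gamma>" by (simp add: powr_mult)
  finally have i2: "ln (real k + 4) powr \<gamma> \<le> 2 powr \<gamma> * ln (real k + 3) powr \<gamma>" .
  have "\<phi> (real k + 4) \<le> (2 powr (m - 1) * (real k + 3) powr (m - 1)) * (2 powr \<gamma> * ln (real k + 3) powr \<gamma>)"
    unfolding \<phi>_def by (intro mult_mono i1 i2) auto
  thus ?thesis by (simp add: R_def \<phi>_def algebra_simps)
qed

definition g :: "nat \<Rightarrow> real" where "g n = real n powr m * ln (real n) powr \<gamma>"

lemma sum_phi_upper: assumes n: "n \<ge> 2"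
  shows "(\<Sum>k\<le>n. \<phi> (real k + 3)) \<le> 2 * 3 powr (m - 1 + \<gamma>) * g n"
proof -
  have nr: "real n \<ge> 2" using n by simp
  have "(\<Sum>k\<le>n. \<phi> (real k + 3)) \<le> (\<Sum>k\<le>n. \<phi> (3 * real n))"
    by (rule sum_mono, rule phi_mono) (use nr in auto)
  also have "\<dots> = (real n + 1) * \<phi> (3 * real n)" by simp
  also have "\<phi> (3 * real n) \<le> 3 powr (m - 1 + \<gamma>) * (real n powr (m - 1) * ln (real n) powr \<gamma>)"
  proof -
    have "3 * real n \<le> real n ^ 3"
    proof -
      have "2 * 2 \<le> real n * real n" using nr by (intro mult_mono) auto
      hence "3 \<le> real n * real n" by simp
      hence "3 * real n \<le> (real n * real n) * real n" using nr by (intro mult_right_mono) auto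
      thus ?thesis by (simp add: power3_eq_cube)
    qed
    hence "ln (3 * real n) \<le> ln (real n ^ 3)" using nr by (subst ln_le_cancel_iff) auto
    hence "ln (3 * real n) \<le> 3 * ln (real n)" using nr by (simp add: ln_realpow)
    hence "ln (3 * real n) powr \<gamma> \<le> (3 * ln (real n)) powr \<gamma>"
      using nr gamma_pos by (intro powr_mono2) auto
    hence "\<phi> (3 * real n) \<le> (3 * real n) powr (m - 1) * (3 * ln (real n)) powr \<gamma>"
      unfolding \<phi>_def using nr by (intro mult_left_mono) auto
    also have "\<dots> = 3 powr (m - 1 + \<gamma>) * (real n powr (m - 1) * ln (real n) powr \<gamma>)"
      using nr by (simp add: powr_mult powr_add)
    finally show ?thesis .
  qed
  hence "(real n + 1) * \<phi> (3 * real n) \<le> (2 * real n) * (3 powr (m - 1 + \<gamma>) * (real n powr (m - 1) * ln (real n) powr \<gamma>))"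
    using nr by (intro mult_mono) (auto intro: phi_nonneg)
  also have "\<dots> = 2 * 3 powr (m - 1 + \<gamma>) * g n"
  proof -
    have "real n * real n powr (m - 1) = real n powr m" using nr by (simp add: powr_mult_base)
    thus ?thesis unfolding g_def by (simp add: algebra_simps)
  qed
  finally show ?thesis .
qed


lemma sum_phi_lower: assumes n: "n \<ge> 2"
  shows "g n / 2 powr (m + \<gamma>) \<le> (\<Sum>k\<le>n. \<phi> (real k + 3))"
proof -
  define h where "h = n div 2"
  have nr: "real n \<ge> 2" using n by simp
  have hr: "real h \<ge> (real n - 1) / 2"
  proof -
    have "n = 2 * h + n mod 2" by (simp add: h_def)
    moreover have "n mod 2 \<le> 1" by simp
    ultimately have "real n \<le> 2 * real h + 1" by linarith
    thus ?thesis by simp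
  qed
  define Y where "Y = (real n / 2) powr (m - 1) * (ln (real n) / 2) powr \<gamma>"
  have lnn: "ln (real n) > 0" using nr by simp
  have Yk: "Y \<le> \<phi> (real k + 3)" if k: "k \<in> {h..n}" for k
  proof -
    have k1: "real k + 3 \<ge> real n / 2" using k hr by auto
    have k2: "real k + 3 \<ge> 2" by simp
    have "real n \<le> (real k + 3) * (real k + 3)"
    proof -
      have "2 * (real n / 2) \<le> (real k + 3) * (real k + 3)" using k1 k2 nr by (intro mult_mono) auto
      thus ?thesis by simp
    qed
    hence "ln (real n) \<le> ln ((real k + 3) ^ 2)" using nr by (subst ln_le_cancel_iff) (auto simp: power2_eq_square)
    hence "ln (real n) / 2 \<le> ln (real k + 3)" by (simp add: ln_realpow)
    hence a: "(ln (real n) / 2) powr \<gamma> \<le> ln (real k + 3) powr \<gamma>"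
      using lnn gamma_pos by (intro powr_mono2) auto
    have b: "(real n / 2) powr (m - 1) \<le> (real k + 3) powr (m - 1)"
      using k1 m1 nr by (intro powr_mono2) auto
    show ?thesis unfolding Y_def \<phi>_def using a b by (intro mult_mono) auto
  qed
  have "(\<Sum>k\<le>n. \<phi> (real k + 3)) \<ge> (\<Sum>k\<in>{h..n}. \<phi> (real k + 3))"
    by (rule sum_mono2) (auto intro: phi_nonneg)
  moreover have "(\<Sum>k\<in>{h..n}. \<phi> (real k + 3)) \<ge> (\<Sum>k\<in>{h..n}. Y)"
    by (rule sum_mono) (rule Yk)
  moreover have "(\<Sum>k\<in>{h..n}. Y) = real (n + 1 - h) * Y" by simp
  moreover have "real (n + 1 - h) \<ge> real n / 2"
  proof -
    have "h \<le> n" by (simp add: h_def)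
    hence "real (n + 1 - h) = real n + 1 - real h" by simp
    moreover have "real h \<le> real n / 2" by (simp add: h_def)
    ultimately show ?thesis by simp
  qed
  moreover have Y0: "Y \<ge> 0" unfolding Y_def by simp
  ultimately have "(\<Sum>k\<le>n. \<phi> (real k + 3)) \<ge> real n / 2 * Y"
    by (smt (verit) mult_right_mono)
  moreover have "real n / 2 * Y = g n / 2 powr (m + \<gamma>)"
  proof -
    have "real n / 2 * (real n / 2) powr (m - 1) = (real n / 2) powr m"
      using nr powr_mult_base[of "real n / 2" "m - 1"] by simp
    also have "\<dots> = real n powr m / 2 powr m" using nr by (simp add: powr_divide)
    finally have e1: "real n / 2 * (real n / 2) powr (m - 1) = real n powr m / 2 powr m" .
    have e2: "(ln (real n) / 2) powr \<gamma> = ln (real n) powr \<gamma> / 2 powr \<gamma>" using lnn by (simp add: powr_divide)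
    have "real n / 2 * Y = (real n / 2 * (real n / 2) powr (m - 1)) * (ln (real n) / 2) powr \<gamma>"
      by (simp add: Y_def)
    also have "\<dots> = (real n powr m / 2 powr m) * (ln (real n) powr \<gamma> / 2 powr \<gamma>)" using e1 e2 by simp
    also have "\<dots> = g n / 2 powr (m + \<gamma>)" by (simp add: g_def powr_add)
    finally show ?thesis .
  qed
  ultimately show ?thesis by linarith
qed

end

lemma final_ineq:
  fixes M Z G X Pv P m q :: real
  assumes "M > 0" "0 \<le> G" "G \<le> X" "0 < X" "X \<le> 1" "m > 1" "q \<ge> m" "0 \<le> Pv" "Pv \<le> P"
    and key: "M * P * X powr (m - 1) * X \<le> Z"
  shows "(1 / M) * (- Z) + Pv * G powr q \<le> 0"
proof -
  have "G powr q \<le> X powr q" using assms by (intro powr_mono2) auto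
  also have "\<dots> \<le> X powr m" using assms by (intro powr_mono') auto
  also have "\<dots> = X powr (m - 1) * X" using assms powr_add[of X "m - 1" 1] by simp
  finally have g: "G powr q \<le> X powr (m - 1) * X" .
  have "Pv * G powr q \<le> P * (X powr (m - 1) * X)"
    using g assms by (intro mult_mono) auto
  also have "\<dots> \<le> Z / M" using key assms by (simp add: field_simps)
  finally show ?thesis by simp
qed

lemma powr_m2: "t > 0 \<Longrightarrow> t powr (m - 2) * t = t powr (m - 1)"
  for t m :: real
  using powr_add[of t "m - 2" 1] by simp

locale M = T N r + An m \<epsilon> for N r m \<epsilon> +
  fixes p q :: real
  assumes qm: "q \<ge> m"
begin

definition "B = suminf dd"
definition "P = 2 powr \<bar>p\<bar>"
definition "A = P * (2 + 2 * R)"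
definition "\<kappa> = 1 / (1 + B + A * B + P * B)"
definition "v k = 2 - \<kappa> * (\<Sum>j<k. dd j)"
definition "S k = 1 + \<kappa> * A * (\<Sum>j<k. dd j)"
definition "\<delta> k = \<kappa> * dd k"
definition "K0 = \<kappa> powr (1 - m)"
definition "e k = S k * K0 * \<phi> (real k + 3)"
definition "w k = e k / (real N * real (N - 1) ^ k)"
definition "\<mu> x y = (if adj x y then w (min (D x) (D y)) else 0)"
definition "u x = v (D x)"

lemma psum: "(\<Sum>j<k. dd j) \<le> B" "0 \<le> (\<Sum>j<k. dd j)"
proof -
  show "(\<Sum>j<k. dd j) \<le> B" unfolding B_def
    by (rule sum_le_suminf[OF summable_dd]) (auto intro: less_imp_le dd_pos)
  show "0 \<le> (\<Sum>j<k. dd j)" by (rule sum_nonneg) (auto intro: less_imp_le dd_pos)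
qed

lemma dd0B: "dd 0 \<le> B" using psum(1)[of 1] by simp

lemma B_pos: "B > 0" using dd0B dd_pos[of 0] by simp
lemma P_ge1: "P \<ge> 1" unfolding P_def using powr_mono[of 0 "\<bar>p\<bar>" 2] by simp
lemma R_pos: "R > 0" unfolding R_def by simp
lemma A_pos: "A > 0" unfolding A_def using P_ge1 R_pos by simp

lemma kappa: "\<kappa> > 0" "\<kappa> * B \<le> 1" "\<kappa> * A * B \<le> 1" "\<kappa> * P * B \<le> 1"
proof -
  have d: "1 + B + A * B + P * B > 0" using B_pos A_pos P_ge1 by (simp add: add_pos_pos)
  show "\<kappa> > 0" using d by (simp add: \<kappa>_def)
  have "B \<le> 1 + B + A * B + P * B" "A * B \<le> 1 + B + A * B + P * B" "P * B \<le> 1 + B + A * B + P * B"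
    using B_pos A_pos P_ge1 by auto
  thus "\<kappa> * B \<le> 1" "\<kappa> * A * B \<le> 1" "\<kappa> * P * B \<le> 1" using d by (auto simp: \<kappa>_def field_simps)
qed

lemma v_bounds: "1 \<le> v k" "v k \<le> 2"
proof -
  have "\<kappa> * (\<Sum>j<k. dd j) \<le> \<kappa> * B" using psum kappa by (intro mult_left_mono) auto
  thus "1 \<le> v k" using kappa unfolding v_def by linarith
  show "v k \<le> 2" using psum kappa unfolding v_def by simp
qed

lemma S_bounds: "1 \<le> S k" "S k \<le> 2"
proof -
  have "\<kappa> * A * (\<Sum>j<k. dd j) \<le> \<kappa> * A * B" using psum kappa A_pos by (intro mult_left_mono) auto
  thus "S k \<le> 2" using kappa unfolding S_def by linarith
  show "1 \<le> S k" using psum kappa A_pos unfolding S_def by simp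
qed

lemma v_step: "v (Suc k) = v k - \<delta> k" by (simp add: v_def \<delta>_def algebra_simps)
lemma S_step: "S (Suc k) = S k + A * \<delta> k" by (simp add: S_def \<delta>_def algebra_simps)

lemma delta_pos: "\<delta> k > 0" using kappa dd_pos by (simp add: \<delta>_def)
lemma delta_le1: "\<delta> k \<le> 1"
proof -
  have "\<delta> k \<le> \<kappa> * B" unfolding \<delta>_def using dd_antimono[of 0 k] dd0B kappa by (intro mult_left_mono) auto
  thus ?thesis using kappa by simp
qed
lemma delta_mono: "\<delta> (Suc k) \<le> \<delta> k" unfolding \<delta>_def using dd_mono kappa by (intro mult_left_mono) auto
lemma delta0P: "P * \<delta> 0 \<le> 1"
proof -
  have "P * \<delta> 0 \<le> P * (\<kappa> * B)" unfolding \<delta>_def using dd0B kappa P_ge1 by (intro mult_left_mono) auto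
  thus ?thesis using kappa by (simp add: algebra_simps)
qed

lemma phi_pos: "\<phi> (real j + 3) > 0"
proof -
  have "ln (real j + 3) > 0" by simp
  thus ?thesis unfolding \<phi>_def by simp
qed

lemma e_pos: "e k > 0" unfolding e_def K0_def
  by (intro mult_pos_pos) (use S_bounds(1)[of k] kappa(1) phi_pos[of k] in auto)
lemma w_pos: "w k > 0" using e_pos N2 by (simp add: w_def)

lemma e_delta: "e k * \<delta> j powr (m - 1) = S k * \<phi> (real k + 3) / \<phi> (real j + 3)"
proof -
  have "\<delta> j powr (m - 1) = \<kappa> powr (m - 1) * dd j powr (m - 1)"
    unfolding \<delta>_def using kappa dd_pos by (simp add: powr_mult)
  moreover have "dd j powr (m - 1) = 1 / \<phi> (real j + 3)" using dd_powr[of j] phi_pos[of j] by (simp add: field_simps)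
  moreover have "K0 * \<kappa> powr (m - 1) = 1" unfolding K0_def using kappa by (simp add: powr_add[symmetric])
  ultimately show ?thesis unfolding e_def by (simp add: field_simps)
qed

lemma e_delta_same: "e k * \<delta> k powr (m - 1) = S k"
  using e_delta[of k k] phi_pos[of k] by simp

lemma e_delta_next: "e (Suc k) * \<delta> k powr (m - 1) \<le> 2 * R"
proof -
  have "e (Suc k) * \<delta> k powr (m - 1) = S (Suc k) * (\<phi> (real k + 4) / \<phi> (real k + 3))"
    using e_delta[of "Suc k" k] by (simp add: add.commute add.left_commute)
  also have "\<dots> \<le> 2 * R"
  proof (rule mult_mono)
    show "\<phi> (real k + 4) / \<phi> (real k + 3) \<le> R" using phi_ratio[of k] phi_pos[of k] by (simp add: divide_simps)
  qed (use S_bounds R_pos phi_pos[of k] phi_nonneg[of "real k + 4"] in auto)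
  finally show ?thesis .
qed


lemma mu_nbr: "y \<in> nbrs N x \<Longrightarrow> \<mu> x y = w (min (D x) (D y))"
  by (simp add: \<mu>_def adj_nbrs)

lemma Pv: "0 \<le> v k powr p" "v k powr p \<le> P"
proof -
  show "0 \<le> v k powr p" by simp
  show "v k powr p \<le> P"
  proof (cases "p \<ge> 0")
    case True
    hence "v k powr p \<le> 2 powr p" using v_bounds[of k] by (intro powr_mono2) auto
    thus ?thesis using True by (simp add: P_def)
  next
    case False
    hence "v k powr p \<le> v k powr 0" using v_bounds[of k] by (intro powr_mono) auto
    thus ?thesis using v_bounds[of k] P_ge1 by simp
  qed
qed

lemma vmeas_eq: assumes xV: "x \<in> V"
  shows "vmeas N \<mu> x = (if x = r then real N * w 0 else w (D x - 1) + real (N - 1) * w (D x))"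
proof -
  have "vmeas N \<mu> x = (\<Sum>y\<in>nbrs N x. (\<lambda>j. w (min (D x) j)) (D y))"
    unfolding vmeas_def by (rule sum.cong) (auto simp: mu_nbr)
  also have "\<dots> = (if x = r then real N * w (min (D x) (Suc (D x))) else w (min (D x) (D x - 1)) + real (N - 1) * w (min (D x) (Suc (D x))))"
    by (rule sum_nbrs[OF xV])
  finally show ?thesis using D_r by simp
qed

lemma lap_sum: assumes xV: "x \<in> V"
  shows "(\<Sum>y\<in>nbrs N x. \<mu> x y * \<bar>u y - u x\<bar> powr (m - 2) * (u y - u x)) =
    (if x = r then real N * (- (w 0 * \<delta> 0 powr (m - 1)))
     else w (D x - 1) * \<delta> (D x - 1) powr (m - 1) + real (N - 1) * (- (w (D x) * \<delta> (D x) powr (m - 1))))"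
proof -
  define H where "H j = w (min (D x) j) * \<bar>v j - v (D x)\<bar> powr (m - 2) * (v j - v (D x))" for j
  have "(\<Sum>y\<in>nbrs N x. \<mu> x y * \<bar>u y - u x\<bar> powr (m - 2) * (u y - u x)) = (\<Sum>y\<in>nbrs N x. H (D y))"
    by (rule sum.cong) (auto simp: mu_nbr H_def u_def)
  also have "\<dots> = (if x = r then real N * H (Suc (D x)) else H (D x - 1) + real (N - 1) * H (Suc (D x)))"
    by (rule sum_nbrs[OF xV])
  finally have eq: "(\<Sum>y\<in>nbrs N x. \<mu> x y * \<bar>u y - u x\<bar> powr (m - 2) * (u y - u x)) = (if x = r then real N * H (Suc (D x)) else H (D x - 1) + real (N - 1) * H (Suc (D x)))" .
  have h1: "H (Suc (D x)) = - (w (D x) * \<delta> (D x) powr (m - 1))"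
    unfolding H_def v_step using delta_pos[of "D x"] powr_m2[of "\<delta> (D x)" m] by simp
  have h2: "H (D x - 1) = w (D x - 1) * \<delta> (D x - 1) powr (m - 1)" if "x \<noteq> r"
  proof -
    have "D x \<noteq> 0" using D_zero that by blast
    then obtain j where j: "D x = Suc j" by (cases "D x") auto
    show ?thesis unfolding H_def j v_step using delta_pos[of j] powr_m2[of "\<delta> j" m] by simp
  qed
  show ?thesis using eq h1 h2 D_r by (cases "x = r") auto
qed

lemma grad_sum: assumes xV: "x \<in> V"
  shows "(\<Sum>y\<in>nbrs N x. \<mu> x y / (2 * vmeas N \<mu> x) * (u y - u x)\<^sup>2) =
    (if x = r then real N * (w 0 / (2 * vmeas N \<mu> x) * \<delta> 0 ^ 2)
     else w (D x - 1) / (2 * vmeas N \<mu> x) * \<delta> (D x - 1) ^ 2 + real (N - 1) * (w (D x) / (2 * vmeas N \<mu> x) * \<delta> (D x) ^ 2))"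
proof -
  define H where "H j = w (min (D x) j) / (2 * vmeas N \<mu> x) * (v j - v (D x))\<^sup>2" for j
  have "(\<Sum>y\<in>nbrs N x. \<mu> x y / (2 * vmeas N \<mu> x) * (u y - u x)\<^sup>2) = (\<Sum>y\<in>nbrs N x. H (D y))"
    by (rule sum.cong) (auto simp: mu_nbr H_def u_def)
  also have "\<dots> = (if x = r then real N * H (Suc (D x)) else H (D x - 1) + real (N - 1) * H (Suc (D x)))"
    by (rule sum_nbrs[OF xV])
  finally have eq: "(\<Sum>y\<in>nbrs N x. \<mu> x y / (2 * vmeas N \<mu> x) * (u y - u x)\<^sup>2) = (if x = r then real N * H (Suc (D x)) else H (D x - 1) + real (N - 1) * H (Suc (D x)))" .
  have h1: "H (Suc (D x)) = w (D x) / (2 * vmeas N \<mu> x) * \<delta> (D x) ^ 2"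
    unfolding H_def v_step by (simp add: power2_eq_square)
  have h2: "H (D x - 1) = w (D x - 1) / (2 * vmeas N \<mu> x) * \<delta> (D x - 1) ^ 2" if "x \<noteq> r"
  proof -
    have "D x \<noteq> 0" using D_zero that by blast
    then obtain j where j: "D x = Suc j" by (cases "D x") auto
    show ?thesis unfolding H_def j v_step by (simp add: power2_eq_square)
  qed
  show ?thesis using eq h1 h2 D_r by (cases "x = r") auto
qed

lemma sqrt_le: "0 \<le> a \<Longrightarrow> a \<le> X\<^sup>2 \<Longrightarrow> 0 \<le> X \<Longrightarrow> sqrt a \<le> X"
  by (metis real_sqrt_abs real_sqrt_le_mono abs_of_nonneg)

lemma vertex_ineq: assumes xV: "x \<in> V"
  shows "m_laplacian N \<mu> m u x + u x powr p * grad_norm N \<mu> u x powr q \<le> 0"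
proof (cases "x = r")
  case True
  have Dx: "D x = 0" using True D_r by simp
  have Mv: "vmeas N \<mu> x = e 0" using vmeas_eq[OF xV] True N2 by (simp add: w_def)
  have S0: "S 0 = 1" by (simp add: S_def)
  have lap: "m_laplacian N \<mu> m u x = (1 / e 0) * (- 1)"
  proof -
    have "real N * (- (w 0 * \<delta> 0 powr (m - 1))) = - (e 0 * \<delta> 0 powr (m - 1))"
      using N2 by (simp add: w_def)
    also have "\<dots> = -1" using e_delta_same[of 0] S0 by simp
    finally show ?thesis unfolding m_laplacian_def lap_sum[OF xV] Mv using True by simp
  qed
  have s: "(\<Sum>y\<in>nbrs N x. \<mu> x y / (2 * vmeas N \<mu> x) * (u y - u x)\<^sup>2) = \<delta> 0 ^ 2 / 2"
    unfolding grad_sum[OF xV] using Mv True N2 e_pos[of 0] by (simp add: w_def field_simps)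
  have G: "grad_norm N \<mu> u x = sqrt (\<delta> 0 ^ 2 / 2)" unfolding grad_norm_def s ..
  have G0: "0 \<le> grad_norm N \<mu> u x" unfolding G by simp
  have gr: "grad_norm N \<mu> u x \<le> \<delta> 0" unfolding G using delta_pos[of 0] by (intro sqrt_le) auto
  have kk: "e 0 * P * \<delta> 0 powr (m - 1) * \<delta> 0 \<le> 1"
    using e_delta_same[of 0] S0 delta0P by (simp add: algebra_simps)
  have "(1 / e 0) * (- 1) + v 0 powr p * grad_norm N \<mu> u x powr q \<le> 0"
    by (rule final_ineq[of "e 0" "grad_norm N \<mu> u x" "\<delta> 0" m q "v 0 powr p" P 1])
       (use e_pos[of 0] G0 gr delta_pos[of 0] delta_le1[of 0] m1 qm Pv[of 0] kk in auto)
  thus ?thesis using lap Dx by (simp add: u_def)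
next
  case False
  have "D x \<noteq> 0" using D_zero False by blast
  then obtain j where j: "D x = Suc j" by (cases "D x") auto
  define c where "c = real N * real (N - 1) ^ j"
  have N1: "real (N - 1) > 0" using N2 by simp
  have cpos: "c > 0" using N2 N1 by (simp add: c_def)
  have wj: "w j = e j / c" by (simp add: w_def c_def)
  have wSj: "real (N - 1) * w (Suc j) = e (Suc j) / c"
    using N1 by (simp add: w_def c_def field_simps)
  define X where "X = \<delta> j"
  define Y where "Y = \<delta> (Suc j)"
  have Mv: "vmeas N \<mu> x = (e j + e (Suc j)) / c"
    using vmeas_eq[OF xV] False j wj wSj by (simp add: add_divide_distrib)
  have Mpos: "vmeas N \<mu> x > 0" using Mv e_pos cpos by (simp add: add_pos_pos)
  have lap: "m_laplacian N \<mu> m u x = (1 / vmeas N \<mu> x) * (- (A * X / c))"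
  proof -
    have "w j * X powr (m - 1) + real (N - 1) * (- (w (Suc j) * Y powr (m - 1)))
        = w j * X powr (m - 1) - (real (N - 1) * w (Suc j)) * Y powr (m - 1)"
      by (simp add: algebra_simps)
    also have "\<dots> = e j / c * X powr (m - 1) - e (Suc j) / c * Y powr (m - 1)"
      by (simp only: wj wSj)
    also have "\<dots> = (e j * X powr (m - 1) - e (Suc j) * Y powr (m - 1)) / c"
      by (simp add: diff_divide_distrib)
    also have "\<dots> = (S j - S (Suc j)) / c" unfolding X_def Y_def e_delta_same by simp
    also have "\<dots> = - (A * X / c)" by (simp add: S_step X_def)
    finally show ?thesis unfolding m_laplacian_def lap_sum[OF xV] using False j X_def Y_def by simp
  qed
  have gr: "grad_norm N \<mu> u x \<le> X"
  proof -
    have YX: "Y ^ 2 \<le> X ^ 2" unfolding X_def Y_def using delta_mono[of j] delta_pos[of "Suc j"]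
      by (intro power_mono) auto
    have "(\<Sum>y\<in>nbrs N x. \<mu> x y / (2 * vmeas N \<mu> x) * (u y - u x)\<^sup>2)
        = (w j * X ^ 2 + real (N - 1) * w (Suc j) * Y ^ 2) / (2 * vmeas N \<mu> x)"
      unfolding grad_sum[OF xV] using False j X_def Y_def by (simp add: add_divide_distrib)
    also have "\<dots> \<le> (w j * X ^ 2 + real (N - 1) * w (Suc j) * X ^ 2) / (2 * vmeas N \<mu> x)"
      using YX w_pos[of "Suc j"] N1 Mpos by (intro divide_right_mono add_left_mono mult_left_mono) (auto intro: mult_nonneg_nonneg less_imp_le)
    also have "\<dots> = X ^ 2 / 2"
      using vmeas_eq[OF xV] False j Mpos by (simp add: field_simps)
    also have "\<dots> \<le> X ^ 2" by simp
    finally have le: "(\<Sum>y\<in>nbrs N x. \<mu> x y / (2 * vmeas N \<mu> x) * (u y - u x)\<^sup>2) \<le> X ^ 2" .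
    have ge: "0 \<le> (\<Sum>y\<in>nbrs N x. \<mu> x y / (2 * vmeas N \<mu> x) * (u y - u x)\<^sup>2)"
      using Mpos by (intro sum_nonneg) (auto simp: \<mu>_def w_pos less_imp_le)
    show ?thesis unfolding grad_norm_def using le ge delta_pos[of j] X_def by (intro sqrt_le) auto
  qed
  have key: "vmeas N \<mu> x * P * X powr (m - 1) * X \<le> A * X / c"
  proof -
    have "vmeas N \<mu> x * X powr (m - 1) = (S j + e (Suc j) * \<delta> j powr (m - 1)) / c"
      unfolding Mv X_def using e_delta_same[of j] by (simp add: field_simps)
    also have "\<dots> \<le> (2 + 2 * R) / c"
      using S_bounds(2)[of j] e_delta_next[of j] cpos by (intro divide_right_mono) auto
    finally have "vmeas N \<mu> x * X powr (m - 1) \<le> (2 + 2 * R) / c" .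
    hence "P * X * (vmeas N \<mu> x * X powr (m - 1)) \<le> P * X * ((2 + 2 * R) / c)"
      using P_ge1 delta_pos[of j] X_def by (intro mult_left_mono) auto
    thus ?thesis by (simp add: A_def algebra_simps)
  qed
  have G0: "0 \<le> grad_norm N \<mu> u x"
    unfolding grad_norm_def using Mpos
    by (intro real_sqrt_ge_zero sum_nonneg) (auto simp: \<mu>_def w_pos less_imp_le)
  have "(1 / vmeas N \<mu> x) * (- (A * X / c)) + v (D x) powr p * grad_norm N \<mu> u x powr q \<le> 0"
    by (rule final_ineq[OF Mpos G0 gr _ _ m1 qm Pv key])
       (use delta_pos[of j] delta_le1[of j] X_def in auto)
  thus ?thesis using lap by (simp add: u_def)
qed


lemma W_eq: "W N \<mu> r n = (\<Sum>k\<le>n. e k)"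
proof -
  have "W N \<mu> r n = (\<Sum>k\<le>n. real (card (Lv (Suc k))) * w k)"
    by (rule W_formula) (simp add: \<mu>_def)
  also have "\<dots> = (\<Sum>k\<le>n. e k)"
  proof (rule sum.cong)
    fix k
    define c where "c = real N * real (N - 1) ^ k"
    have h1: "real (card (Lv (Suc k))) = c" using card_Lv[of "Suc k"] by (simp add: c_def)
    have h2: "c \<noteq> 0" using N2 by (simp add: c_def)
    have h3: "w k = e k / c" by (simp add: w_def c_def)
    show "real (card (Lv (Suc k))) * w k = e k" unfolding h1 h3 using h2 by simp
  qed simp
  finally show ?thesis .
qed

lemma K0_pos: "K0 > 0" using kappa by (simp add: K0_def)

lemma W_asym: "asymp_equiv2 (W N \<mu> r) (\<lambda>n. real n powr m * ln (real n) powr (m - 1 + \<epsilon>))"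
  unfolding asymp_equiv2_def
proof (intro exI conjI allI impI)
  show "K0 / 2 powr (m + \<gamma>) > 0" using K0_pos by simp
  show "2 * K0 * (2 * 3 powr (m - 1 + \<gamma>)) > 0" using K0_pos by simp
  fix n :: nat assume n: "n \<ge> 2"
  have tg: "real n powr m * ln (real n) powr (m - 1 + \<epsilon>) = g n" by (simp add: g_def \<gamma>_def)
  have lo: "K0 * (\<Sum>k\<le>n. \<phi> (real k + 3)) \<le> W N \<mu> r n"
    unfolding W_eq sum_distrib_left
  proof (rule sum_mono)
    fix k
    have "K0 * \<phi> (real k + 3) * 1 \<le> K0 * \<phi> (real k + 3) * S k"
      using S_bounds(1)[of k] K0_pos phi_pos[of k] by (intro mult_left_mono) auto
    thus "K0 * \<phi> (real k + 3) \<le> e k" by (simp add: e_def algebra_simps)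
  qed
  have up: "W N \<mu> r n \<le> 2 * K0 * (\<Sum>k\<le>n. \<phi> (real k + 3))"
    unfolding W_eq sum_distrib_left
  proof (rule sum_mono)
    fix k
    have "K0 * \<phi> (real k + 3) * S k \<le> K0 * \<phi> (real k + 3) * 2"
      using S_bounds(2)[of k] K0_pos phi_pos[of k] by (intro mult_left_mono) auto
    thus "e k \<le> 2 * K0 * \<phi> (real k + 3)" by (simp add: e_def algebra_simps)
  qed
  have "K0 / 2 powr (m + \<gamma>) * g n = K0 * (g n / 2 powr (m + \<gamma>))" by simp
  also have "\<dots> \<le> K0 * (\<Sum>k\<le>n. \<phi> (real k + 3))"
    using sum_phi_lower[OF n] K0_pos by (intro mult_left_mono) auto
  finally show "K0 / 2 powr (m + \<gamma>) * (real n powr m * ln (real n) powr (m - 1 + \<epsilon>)) \<le> W N \<mu> r n"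
    using lo tg by simp
  have "2 * K0 * (\<Sum>k\<le>n. \<phi> (real k + 3)) \<le> 2 * K0 * (2 * 3 powr (m - 1 + \<gamma>) * g n)"
    using sum_phi_upper[OF n] K0_pos by (intro mult_left_mono) auto
  thus "W N \<mu> r n \<le> 2 * K0 * (2 * 3 powr (m - 1 + \<gamma>)) * (real n powr m * ln (real n) powr (m - 1 + \<epsilon>))"
    using up tg by (simp add: algebra_simps)
qed

lemma weight: "is_weight N \<mu>"
  unfolding is_weight_def \<mu>_def using adj_sym w_pos
  by (auto simp: min.commute less_imp_le)

lemma u_pos: "u x > 0" using v_bounds[of "D x"] by (simp add: u_def)

lemma nonconst: "\<exists>x\<in>V. \<exists>y\<in>V. u x \<noteq> u y"
proof -
  have "card (Lv 1) = N" using card_Lv[of 1] by simp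
  hence "Lv 1 \<noteq> {}" using N2 by auto
  then obtain y where y: "y \<in> Lv 1" by blast
  hence yV: "y \<in> V" and Dy: "D y = 1" by (auto simp: Lv_def)
  have "u r = v 0" using D_r by (simp add: u_def)
  moreover have "u y = v 0 - \<delta> 0" using Dy v_step[of 0] by (simp add: u_def)
  ultimately have "u r \<noteq> u y" using delta_pos[of 0] by simp
  thus ?thesis using rV yV by blast
qed

end

theorem mainTheorem9:
  fixes N :: nat and r :: "nat list" and m p q \<epsilon> :: real
  assumes "N \<ge> 2" and "r \<in> tree_verts N" and "m > 1" and "q \<ge> m" and "\<epsilon> > 0"
  shows "\<exists>\<mu>. is_weight N \<mu> \<and>
           asymp_equiv2 (W N \<mu> r) (\<lambda>n. real n powr m * ln (real n) powr (m - 1 + \<epsilon>)) \<and>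
           (\<exists>u :: nat list \<Rightarrow> real.
               (\<forall>x\<in>tree_verts N. u x > 0) \<and>
               (\<exists>x\<in>tree_verts N. \<exists>y\<in>tree_verts N. u x \<noteq> u y) \<and>
               (\<forall>x\<in>tree_verts N. m_laplacian N \<mu> m u x + u x powr p * grad_norm N \<mu> u x powr q \<le> 0))"
proof -
  interpret M N r m \<epsilon> p q
    by unfold_locales (use assms in auto)
  have 1: "is_weight N \<mu>" by (rule weight)
  have 2: "asymp_equiv2 (W N \<mu> r) (\<lambda>n. real n powr m * ln (real n) powr (m - 1 + \<epsilon>))" by (rule W_asym)
  have 3: "\<forall>x\<in>tree_verts N. u x > 0" using u_pos by blast
  have 4: "\<exists>x\<in>tree_verts N. \<exists>y\<in>tree_verts N. u x \<noteq> u y" by (rule nonconst)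
  have 5: "\<forall>x\<in>tree_verts N. m_laplacian N \<mu> m u x + u x powr p * grad_norm N \<mu> u x powr q \<le> 0"
    using vertex_ineq by blast
  show ?thesis using 1 2 3 4 5 by blast
qed

end
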